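(* Let $m\ge3$ and $h\ge1$ be integers and set $n'=2^{2m+h-3}-2^{2m-3}-2^{m-1}$. Let $\mathbf{C}_0$ be a projective binary linear $[2^{2m-3}+2^{m-2}-1,\ 2m-2]$ code whose set of nonzero weights is $\{2^{2m-4},\,2^{2m-4}+2^{m-2}\}$, and let $\mathbf{C}_1$ be its simplex complementary code of dimension $2m+h-2$, a $[2^{2m+h-2}-2^{2m-3}-2^{m-2},\ 2m+h-2,\ 2^{2m+h-3}-2^{2m-4}-2^{m-2}]_2$ code with maximum weight $2^{2m+h-3}$. Then the code $\mathbf{C}'$ obtained from $\mathbf{C}_1$ by the extension construction is a minimal binary linear $[2^{2m+h-2}-2^{2m-3}-2^{m-2}+n',\ 2m+h-2,\ 2^{2m+h-3}-2^{2m-4}-2^{m-2}]_2$ code with maximum weight $2^{2m+h-2}-2^{2m-3}-2^{m-1}$, and it violates the Ashikhmin–Barg condition.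
   Context: Projective code: columns of a generator matrix are nonzero and pairwise distinct (binary case). Simplex complementary code of dimension $K=k+h$ of a projective binary $[n,k]$ code: append $h$ zeros to the columns of a generator matrix and take the code generated by the matrix whose columns are all nonzero vectors of $\mathbf{F}_2^K$ other than these $n$. Extension construction for a binary $[N,K]$ code $\mathbf{D}$, $K\ge2$, with minimum nonzero weight $w_{min}$, maximum weight $w_{max}$ and $n'=2w_{min}-w_{max}\ge1$: choose a basis $\mathbf{r}_1,\dots,\mathbf{r}_K$ with $wt(\mathbf{r}_1)=w_{max}$, $wt(\mathbf{r}_2)=w_{min}$; the extended code is generated by $(\mathbf{1},\mathbf{r}_1),(\mathbf{0},\mathbf{r}_2),\dots,(\mathbf{0},\mathbf{r}_K)$ in $\mathbf{F}_2^{n'+N}$. Minimal code: nonzero codewords with nested supports are equal. Ashikhmin–Barg condition (binary): $w_{min}/w_{max}>1/2$. *)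

theory Defs
  imports Main "HOL-Library.Extended_Real" Complex_Main
begin

text \<open>Binary vectors of length n are boolean lists of length n (True = 1).\<close>

definition vecs :: "nat \<Rightarrow> bool list set" where
  "vecs n = {v. length v = n}"

definition zerov :: "nat \<Rightarrow> bool list" where
  "zerov n = replicate n False"

definition is_nonzero :: "bool list \<Rightarrow> bool" where
  "is_nonzero v \<longleftrightarrow> True \<in> set v"

definition vadd :: "bool list \<Rightarrow> bool list \<Rightarrow> bool list" where
  "vadd u v = map2 (\<noteq>) u v"

definition wt :: "bool list \<Rightarrow> nat" where
  "wt v = length (filter id v)"

definition supp :: "bool list \<Rightarrow> nat set" where
  "supp v = {i. i < length v \<and> v ! i}"

definition dotp :: "bool list \<Rightarrow> bool list \<Rightarrow> bool" where
  "dotp u c = odd (length (filter id (map2 (\<and>) u c)))"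

text \<open>Code of length (length cols) generated by the k x n generator matrix
  whose columns are the vectors in cols (each of length k): codewords u G.\<close>
definition code_of_cols :: "nat \<Rightarrow> bool list list \<Rightarrow> bool list set" where
  "code_of_cols k cols = {map (dotp u) cols | u. u \<in> vecs k}"

definition lincomb :: "nat \<Rightarrow> bool list list \<Rightarrow> bool list \<Rightarrow> bool list" where
  "lincomb N rs u = fold vadd (map snd (filter fst (zip u rs))) (zerov N)"

definition code_of_rows :: "nat \<Rightarrow> bool list list \<Rightarrow> bool list set" where
  "code_of_rows N rs = lincomb N rs ` vecs (length rs)"

definition lin_code :: "bool list set \<Rightarrow> nat \<Rightarrow> nat \<Rightarrow> bool" where
  "lin_code C n k \<longleftrightarrow> C \<subseteq> vecs n \<and> zerov n \<in> C \<and>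
     (\<forall>u\<in>C. \<forall>v\<in>C. vadd u v \<in> C) \<and> card C = 2 ^ k"

definition nz_weights :: "bool list set \<Rightarrow> nat set" where
  "nz_weights C = {wt c | c. c \<in> C \<and> is_nonzero c}"

definition wmin :: "bool list set \<Rightarrow> nat" where
  "wmin C = Min (nz_weights C)"

definition wmax :: "bool list set \<Rightarrow> nat" where
  "wmax C = Max (nz_weights C)"

definition minimal_code :: "bool list set \<Rightarrow> bool" where
  "minimal_code C \<longleftrightarrow> (\<forall>c\<in>C. \<forall>c'\<in>C. is_nonzero c \<and> is_nonzero c' \<and>
      supp c \<subseteq> supp c' \<longrightarrow> c = c')"

definition ashikhmin_barg :: "bool list set \<Rightarrow> bool" where
  "ashikhmin_barg C \<longleftrightarrow> real (wmin C) / real (wmax C) > 1 / 2"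

definition projective_cols :: "nat \<Rightarrow> bool list list \<Rightarrow> bool" where
  "projective_cols k cols \<longleftrightarrow> (\<forall>c\<in>set cols. length c = k \<and> is_nonzero c) \<and> distinct cols"

definition simplex_compl_cols :: "nat \<Rightarrow> nat \<Rightarrow> bool list list \<Rightarrow> bool list list \<Rightarrow> bool" where
  "simplex_compl_cols k h cols cols1 \<longleftrightarrow> distinct cols1 \<and>
     set cols1 = {v \<in> vecs (k + h). is_nonzero v} - (\<lambda>c. c @ replicate h False) ` set cols"

definition ext_basis :: "nat \<Rightarrow> nat \<Rightarrow> bool list set \<Rightarrow> bool list list \<Rightarrow> bool" where
  "ext_basis N K D rs \<longleftrightarrow> length rs = K \<and> (\<forall>r\<in>set rs. length r = N) \<and>
     inj_on (lincomb N rs) (vecs K) \<and> code_of_rows N rs = D \<and>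
     wt (rs ! 0) = wmax D \<and> wt (rs ! 1) = wmin D"

definition ext_code :: "nat \<Rightarrow> bool list set \<Rightarrow> bool list list \<Rightarrow> bool list set" where
  "ext_code N D rs = (let n' = 2 * wmin D - wmax D in
     code_of_rows (n' + N)
       ((replicate n' True @ rs ! 0) # map (\<lambda>r. replicate n' False @ r) (tl rs)))"

end

theory Submission
  imports Defs
begin


lemma vecs_len: "v \<in> vecs n \<longleftrightarrow> length v = n" by (simp add: vecs_def)

lemma finite_vecs[simp]: "finite (vecs n)"
  unfolding vecs_def using finite_lists_length_eq[of "UNIV::bool set" n] by simp

lemma finite_vecs_filter[simp]: "finite {c \<in> vecs n. P c}"
  using finite_vecs by (rule rev_finite_subset) auto

lemma card_vecs: "card (vecs n) = 2^n"
  unfolding vecs_def using card_lists_length_eq[of "UNIV::bool set" n] by simp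

lemma length_zerov[simp]: "length (zerov n) = n" by (simp add: zerov_def)

lemma is_nonzero_iff: "is_nonzero v \<longleftrightarrow> v \<noteq> zerov (length v)"
  unfolding is_nonzero_def zerov_def by (induction v) auto

lemma length_vadd[simp]: "length (vadd u v) = min (length u) (length v)"
  by (simp add: vadd_def)
lemma nth_vadd[simp]: "i < length u \<Longrightarrow> i < length v \<Longrightarrow> vadd u v ! i = (u!i \<noteq> v!i)"
  by (simp add: vadd_def)
lemma vadd_Cons[simp]: "vadd (x#u) (y#v) = (x\<noteq>y) # vadd u v" by (simp add: vadd_def)
lemma vadd_Nil[simp]: "vadd [] v = []" "vadd u [] = []" by (simp_all add: vadd_def)
lemma vadd_append: "length p = length p' \<Longrightarrow> vadd (p@q) (p'@q') = vadd p p' @ vadd q q'"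
  by (simp add: vadd_def)
lemma vadd_comm: "vadd u v = vadd v u" by (intro nth_equalityI) auto
lemma vadd_zero: "length v = n \<Longrightarrow> vadd (zerov n) v = v"
  by (intro nth_equalityI) (auto simp: zerov_def)
lemma vadd_self: "vadd v v = zerov (length v)"
  by (intro nth_equalityI) (auto simp: zerov_def)
lemma vadd_eq_zero: "length u = length v \<Longrightarrow> vadd u v = zerov (length u) \<Longrightarrow> u = v"
proof (intro nth_equalityI)
  fix i assume "length u = length v" "vadd u v = zerov (length u)" "i < length u"
  then have "vadd u v ! i = False" by (simp add: zerov_def)
  then show "u ! i = v ! i" using \<open>length u = length v\<close> \<open>i < length u\<close> by simp
qed simp

lemma dotp_Nil[simp]: "dotp [] c = False" "dotp u [] = False" by (simp_all add: dotp_def)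
lemma dotp_Cons[simp]: "dotp (x#u) (y#c) = ((x\<and>y) \<noteq> dotp u c)"
  by (cases x; cases y) (simp_all add: dotp_def)

lemma dotp_vadd1: "length u = length v \<Longrightarrow> dotp (vadd u v) c = (dotp u c \<noteq> dotp v c)"
proof (induction u arbitrary: v c)
  case Nil then show ?case by simp
next
  case (Cons x u) then show ?case by (cases v; cases c) auto
qed

lemma dotp_zero1: "\<not> is_nonzero u \<Longrightarrow> \<not> dotp u c"
proof (induction u arbitrary: c)
  case Nil then show ?case by simp
next
  case (Cons x u) then show ?case by (cases c) (auto simp: is_nonzero_def)
qed

lemma dotp_zero2: "\<not> is_nonzero c \<Longrightarrow> \<not> dotp u c"
proof (induction u arbitrary: c)
  case Nil then show ?case by simp
next
  case (Cons x u) then show ?case by (cases c) (auto simp: is_nonzero_def)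
qed

lemma dotp_pad: "dotp u (g @ replicate h False) = dotp (take (length g) u) g"
proof (induction g arbitrary: u)
  case Nil then show ?case by (simp add: dotp_zero2 is_nonzero_def)
next
  case (Cons x g) then show ?case by (cases u) auto
qed

lemma vecs_Suc_split: "{v \<in> vecs (Suc n). P v} =
   Cons True ` {c \<in> vecs n. P (True#c)} \<union> Cons False ` {c \<in> vecs n. P (False#c)}"
proof -
  have "v \<in> Cons True ` {c \<in> vecs n. P (True#c)} \<union> Cons False ` {c \<in> vecs n. P (False#c)}"
    if "v \<in> vecs (Suc n)" "P v" for v
  proof (cases v)
    case (Cons a l) then show ?thesis using that by (cases a) (auto simp: vecs_len)
  qed (use that in \<open>auto simp: vecs_len\<close>)
  then show ?thesis by (auto simp: vecs_len)
qed

lemma card_vecs_Suc: "card {v \<in> vecs (Suc n). P v} =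
   card {c \<in> vecs n. P (True#c)} + card {c \<in> vecs n. P (False#c)}"
  unfolding vecs_Suc_split
  by (subst card_Un_disjoint) (auto simp: card_image)

lemma card_compl: "card {c \<in> vecs n. \<not> P c} = 2^n - card {c \<in> vecs n. P c}"
proof -
  have "{c \<in> vecs n. \<not> P c} = vecs n - {c \<in> vecs n. P c}" by auto
  then show ?thesis by (simp add: card_Diff_subset card_vecs del: vecs_len)
qed

lemma count_dotp: "length u = n \<Longrightarrow> is_nonzero u \<Longrightarrow> card {c \<in> vecs n. dotp u c} = 2^(n-1)"
proof (induction u arbitrary: n)
  case Nil then show ?case by (simp add: is_nonzero_def)
next
  case (Cons x u)
  then obtain n' where n: "n = Suc n'" "length u = n'" by auto
  have eq: "card {c \<in> vecs n. dotp (x#u) c} = card {c \<in> vecs n'. (x \<noteq> dotp u c)} + card {c\<in>vecs n'. dotp u c}"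
    using card_vecs_Suc[of n' "dotp (x#u)"] n by simp
  show ?case
  proof (cases "is_nonzero u")
    case True
    then have h: "card {c \<in> vecs n'. dotp u c} = 2^(n'-1)" using Cons.IH n by simp
    have n'pos: "n' \<ge> 1" using True n by (cases u) (auto simp: is_nonzero_def)
    have "card {c \<in> vecs n'. (x \<noteq> dotp u c)} = 2^(n'-1)"
    proof (cases x)
      case True
      have p: "(2::nat)^n' = 2*2^(n'-1)" using n'pos by (cases n') auto
      show ?thesis using card_compl[of n' "dotp u"] h p True by simp
    next
      case False then show ?thesis using h by simp
    qed
    moreover have p: "(2::nat)^n' = 2*2^(n'-1)" using n'pos by (cases n') auto
    ultimately show ?thesis using eq h n by simp
  next
    case False
    then have x: x using Cons.prems by (auto simp: is_nonzero_def)
    have "\<And>c. \<not> dotp u c" using False dotp_zero1 by blast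
    then show ?thesis using eq n x by (simp add: card_vecs)
  qed
qed



lemma wt_map_distinct: "distinct xs \<Longrightarrow> wt (map f xs) = card {x \<in> set xs. f x}"
proof -
  assume d: "distinct xs"
  have "wt (map f xs) = length (filter f xs)" by (simp add: wt_def filter_map comp_def)
  also have "\<dots> = card (set (filter f xs))" using d distinct_card[of "filter f xs"] by simp
  finally show ?thesis by (simp add: set_filter)
qed

lemma wt_append[simp]: "wt (p@q) = wt p + wt q" by (simp add: wt_def)
lemma wt_replicate: "wt (replicate n a) = (if a then n else 0)" by (simp add: wt_def)
lemma wt_zerov[simp]: "wt (zerov n) = 0" by (simp add: wt_def zerov_def)
lemma wt_pos_iff: "wt v > 0 \<longleftrightarrow> is_nonzero v"
  by (simp add: wt_def is_nonzero_def filter_empty_conv) (metis id_apply)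

lemma wt_split: "length c = length c' \<Longrightarrow> (\<forall>i<length c. c!i \<longrightarrow> c'!i) \<Longrightarrow>
   wt c' = wt c + wt (vadd c c')"
proof (induction c c' rule: list_induct2)
  case Nil then show ?case by (simp add: wt_def)
next
  case (Cons x xs y ys)
  have "\<forall>i<length xs. xs!i \<longrightarrow> ys!i" using Cons.prems by auto
  then have "wt ys = wt xs + wt (vadd xs ys)" using Cons.IH by simp
  moreover have "x \<longrightarrow> y" using Cons.prems by force
  ultimately show ?case by (cases x; cases y) (auto simp: wt_def)
qed

lemma code_of_cols_img: "code_of_cols k cols = (\<lambda>u. map (dotp u) cols) ` vecs k"
  by (auto simp: code_of_cols_def)

lemma nz_weights_img: "nz_weights C = wt ` {c\<in>C. is_nonzero c}"
  by (auto simp: nz_weights_def)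

lemma wminmax_bounds:
  assumes "finite C" "c\<in>C" "is_nonzero c"
  shows "wmin C \<le> wt c \<and> wt c \<le> wmax C"
proof -
  have f: "finite (nz_weights C)" using assms(1) by (simp add: nz_weights_img)
  have "wt c \<in> nz_weights C" using assms by (auto simp: nz_weights_img)
  then show ?thesis using f by (simp add: wmin_def wmax_def)
qed

lemma wminmax_eq:
  assumes "finite C" "\<forall>c\<in>C. is_nonzero c \<longrightarrow> lo \<le> wt c \<and> wt c \<le> hi"
    "a \<in> C" "is_nonzero a" "wt a = lo" "b \<in> C" "is_nonzero b" "wt b = hi"
  shows "wmin C = lo \<and> wmax C = hi"
proof -
  have f: "finite (nz_weights C)" using assms(1) by (simp add: nz_weights_img)
  have lo: "lo \<in> nz_weights C" using assms(3-5) by (auto simp: nz_weights_img)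
  have hi: "hi \<in> nz_weights C" using assms(6-8) by (auto simp: nz_weights_img)
  have b: "\<forall>w\<in>nz_weights C. lo \<le> w \<and> w \<le> hi" using assms(2) by (auto simp: nz_weights_img)
  show ?thesis unfolding wmin_def wmax_def
    using f lo hi b by (meson Max_eqI Min_eqI)
qed

lemma fold_vadd_len: "\<forall>x\<in>set xs. length x = length s \<Longrightarrow> length (fold vadd xs s) = length s"
  by (induction xs arbitrary: s) auto

lemma fold_vadd_comm: "\<forall>x\<in>set xs. length x = length s \<Longrightarrow> length r = length s \<Longrightarrow>
   fold vadd xs (vadd r s) = vadd r (fold vadd xs s)"
proof (induction xs arbitrary: s)
  case Nil then show ?case by simp
next
  case (Cons x xs)
  have e: "vadd x (vadd r s) = vadd r (vadd x s)"
    using Cons.prems by (intro nth_equalityI) auto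
  have "fold vadd (x#xs) (vadd r s) = fold vadd xs (vadd r (vadd x s))" using e by simp
  also have "\<dots> = vadd r (fold vadd xs (vadd x s))"
    using Cons.prems by (intro Cons.IH) auto
  finally show ?case by simp
qed

lemma lincomb_Nil_rows[simp]: "lincomb N [] u = zerov N" by (simp add: lincomb_def)
lemma lincomb_Nil_u[simp]: "lincomb N rs [] = zerov N" by (simp add: lincomb_def)

lemma lincomb_len: "\<forall>x\<in>set rs. length x = N \<Longrightarrow> length (lincomb N rs u) = N"
  unfolding lincomb_def
  by (subst fold_vadd_len) (auto dest: set_zip_rightD)

lemma lincomb_Cons: "length r = N \<Longrightarrow> \<forall>x\<in>set rs. length x = N \<Longrightarrow>
  lincomb N (r#rs) (a#u) = (if a then vadd r (lincomb N rs u) else lincomb N rs u)"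
proof -
  assume r: "length r = N" and rs: "\<forall>x\<in>set rs. length x = N"
  have l: "\<forall>x\<in>set (map snd (filter fst (zip u rs))). length x = length (zerov N)"
    using rs by (auto dest: set_zip_rightD)
  show ?thesis unfolding lincomb_def
    using fold_vadd_comm[OF l, of r] r by simp
qed

lemma lincomb_zero: "lincomb N rs (zerov n) = zerov N"
proof -
  have "filter fst (zip (replicate n False) rs) = []"
    by (induction n arbitrary: rs) (auto simp: zip_Cons1 split: list.splits)
  then show ?thesis by (simp add: lincomb_def zerov_def)
qed

lemma lincomb_vadd: "\<forall>x\<in>set rs. length x = N \<Longrightarrow> length u = length rs \<Longrightarrow> length v = length rs \<Longrightarrow>
  lincomb N rs (vadd u v) = vadd (lincomb N rs u) (lincomb N rs v)"
proof (induction rs arbitrary: u v)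
  case Nil then show ?case by (simp add: vadd_self)
next
  case (Cons r rs)
  obtain a u' where u: "u = a#u'" using Cons.prems by (cases u) auto
  obtain b v' where v: "v = b#v'" using Cons.prems by (cases v) auto
  have l: "\<forall>x\<in>set rs. length x = N" "length r = N" using Cons.prems by auto
  have IH: "lincomb N rs (vadd u' v') = vadd (lincomb N rs u') (lincomb N rs v')"
    using Cons u v by simp
  have L: "length (lincomb N rs w) = N" for w using l lincomb_len by blast
  show ?case unfolding u v vadd_Cons lincomb_Cons[OF l(2) l(1)] IH
    using L l by (cases a; cases b) (auto intro!: nth_equalityI)
qed

lemma lincomb_pad0: "\<forall>x\<in>set xs. length x = N \<Longrightarrow>
  lincomb (n+N) (map (\<lambda>r. replicate n False @ r) xs) u = replicate n False @ lincomb N xs u"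
proof (induction xs arbitrary: u)
  case Nil then show ?case by (simp add: zerov_def replicate_add)
next
  case (Cons x xs)
  show ?case
  proof (cases u)
    case Nil then show ?thesis by (simp add: zerov_def replicate_add)
  next
    case (Cons a u')
    have l: "length (replicate n False @ x) = n + N" 
      "\<forall>y\<in>set (map (\<lambda>r. replicate n False @ r) xs). length y = n+N"
      using Cons.prems by auto
    show ?thesis unfolding Cons list.map(2) lincomb_Cons[OF l]
      using Cons.IH Cons.prems lincomb_Cons[of x N xs]
      by (auto simp: vadd_append vadd_self zerov_def)
  qed
qed

lemma ext_struct:
  assumes "length rs = K" "K \<ge> 1" "\<forall>x\<in>set rs. length x = N" "length u = K"
  shows "lincomb (n+N) ((replicate n True @ rs!0) # map (\<lambda>r. replicate n False @ r) (tl rs)) u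
     = replicate n (hd u) @ lincomb N rs u"
proof -
  obtain r0 rs' where rs: "rs = r0#rs'" using assms by (cases rs) auto
  obtain a u' where u: "u = a#u'" using assms by (cases u) auto
  have l: "length (replicate n True @ r0) = n + N" 
      "\<forall>y\<in>set (map (\<lambda>r. replicate n False @ r) rs'). length y = n+N"
      "length r0 = N" "\<forall>y\<in>set rs'. length y = N"
    using assms rs by auto
  have vr: "vadd (replicate n True) (replicate n False) = replicate n True"
    by (intro nth_equalityI) auto
  show ?thesis unfolding rs u list.sel nth_Cons_0 lincomb_Cons[OF l(1,2)] lincomb_pad0[OF l(4)]
      lincomb_Cons[OF l(3,4)]
    by (auto simp: vadd_append vr)
qed



lemma cw_zero: "map (dotp (zerov n)) G = zerov (length G)"
  by (induction G) (auto simp: zerov_def dotp_zero1 is_nonzero_def)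

lemma cw_vadd: "length u = length v \<Longrightarrow>
   map (dotp (vadd u v)) G = vadd (map (dotp u) G) (map (dotp v) G)"
  by (intro nth_equalityI) (auto simp: dotp_vadd1)

lemma nz_vecs: "v \<in> vecs n \<Longrightarrow> is_nonzero v \<longleftrightarrow> v \<noteq> zerov n"
  by (simp add: is_nonzero_iff vecs_len)

lemma hd_vadd: "u \<noteq> [] \<Longrightarrow> v \<noteq> [] \<Longrightarrow> hd (vadd u v) = (hd u \<noteq> hd v)"
  by (cases u; cases v) auto

lemma vadd_rep: "vadd (replicate n a) (replicate n b) = replicate n (a \<noteq> b)"
  by (intro nth_equalityI) auto

lemma arith_facts:
  fixes m h :: nat
  assumes "m \<ge> 3" "h \<ge> 1"
  shows "(2::nat)^(2*m-3) = 2*2^(2*m-4)" "(2::nat)^(m-1) = 2*2^(m-2)"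
    "(2::nat)^(2*m+h-2) = 2*2^(2*m+h-3)" "(2::nat)^(2*m+h-3) \<ge> 4*2^(2*m-4)"
    "(2::nat)^(2*m-4) \<ge> 2*2^(m-2)" "(2::nat)^(m-2) \<ge> 2"
proof -
  obtain p where p: "m = p + 3" using assms(1) by (metis add.commute le_Suc_ex numeral_3_eq_3 add_Suc_right)
  obtain q where q: "h = q + 1" using assms(2) by (metis add.commute le_Suc_ex One_nat_def)
  have a: "2*m-3 = Suc (2*p+2)" "2*m-4 = 2*p+2" "m-1 = Suc (p+1)" "m-2 = p+1"
    "2*m+h-2 = Suc (2*p+q+4)" "2*m+h-3 = (2*p+2) + (q+2)" using p q by auto
  show "(2::nat)^(2*m-3) = 2*2^(2*m-4)" "(2::nat)^(m-1) = 2*2^(m-2)"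
    "(2::nat)^(2*m+h-2) = 2*2^(2*m+h-3)" unfolding a by (simp_all add: power_add)
  have "(2::nat)^(q+2) \<ge> 4" by (induction q) auto
  then show "(2::nat)^(2*m+h-3) \<ge> 4*2^(2*m-4)" unfolding a power_add by simp
  have "(2::nat)^(p+1) \<ge> 2" by (induction p) auto
  then show "(2::nat)^(m-2) \<ge> 2" unfolding a .
  have "(2::nat)^(2*p+2) = 2^(p+1) * 2^(p+1)" by (simp add: power_add[symmetric])
  then show "(2::nat)^(2*m-4) \<ge> 2*2^(m-2)" unfolding a using \<open>(2::nat)^(p+1) \<ge> 2\<close> by simp
qed



theorem proposition4p6:
  fixes m h :: nat and G0 G1 rs :: "bool list list"
  assumes "m \<ge> 3" and "h \<ge> 1"
    and "length G0 = 2^(2*m-3) + 2^(m-2) - 1"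
    and "projective_cols (2*m-2) G0"
    and "lin_code (code_of_cols (2*m-2) G0) (length G0) (2*m-2)"
    and "nz_weights (code_of_cols (2*m-2) G0) = {2^(2*m-4), 2^(2*m-4) + 2^(m-2)}"
    and "simplex_compl_cols (2*m-2) h G0 G1"
    and "ext_basis (length G1) (2*m+h-2) (code_of_cols (2*m+h-2) G1) rs"
  shows "lin_code (code_of_cols (2*m+h-2) G1) (2^(2*m+h-2) - 2^(2*m-3) - 2^(m-2)) (2*m+h-2)
       \<and> wmin (code_of_cols (2*m+h-2) G1) = 2^(2*m+h-3) - 2^(2*m-4) - 2^(m-2)
       \<and> wmax (code_of_cols (2*m+h-2) G1) = 2^(2*m+h-3)
       \<and> (let n' = 2^(2*m+h-3) - 2^(2*m-3) - 2^(m-1);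
              C' = ext_code (length G1) (code_of_cols (2*m+h-2) G1) rs in
          lin_code C' (2^(2*m+h-2) - 2^(2*m-3) - 2^(m-2) + n') (2*m+h-2)
          \<and> wmin C' = 2^(2*m+h-3) - 2^(2*m-4) - 2^(m-2)
          \<and> wmax C' = 2^(2*m+h-2) - 2^(2*m-3) - 2^(m-1)
          \<and> minimal_code C'
          \<and> \<not> ashikhmin_barg C')"
proof -
  define k where "k = 2*m-2"
  define K where "K = 2*m+h-2"
  define A :: nat where "A = 2^(2*m-4)"
  define B :: nat where "B = 2^(m-2)"
  define X :: nat where "X = 2^(2*m+h-3)"
  define cw where "cw = (\<lambda>(G::bool list list) u. map (dotp u) G)"
  define C0 where "C0 = code_of_cols k G0"
  define C1 where "C1 = code_of_cols K G1"
  define N where "N = length G1"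
  have KK: "K = k + h" using assms(1) by (simp add: K_def k_def)
  have K2: "K \<ge> 2" "k \<le> K" using assms(1) by (auto simp: K_def k_def)
  note ar = arith_facts[OF assms(1,2)]
  have e1: "(2::nat)^(2*m-3) = 2*A" "(2::nat)^(m-1) = 2*B" "(2::nat)^(2*m+h-2) = 2*X"
    using ar by (simp_all add: A_def B_def X_def)
  have XA: "X \<ge> 4*A" "A \<ge> 2*B" "B \<ge> 2" using ar by (simp_all add: A_def B_def X_def)
  have eK: "(2::nat)^K = 2*X" "(2::nat)^(K-1) = X" using e1(3) K2
    by (simp_all add: K_def X_def)
  have lenG0: "length G0 = 2*A + B - 1" using assms(3) e1 by (simp add: B_def)
  have C0i: "C0 = cw G0 ` vecs k" by (simp add: C0_def cw_def code_of_cols_img)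
  have C1i: "C1 = cw G1 ` vecs K" by (simp add: C1_def cw_def code_of_cols_img)
  have proj: "\<forall>c\<in>set G0. length c = k \<and> is_nonzero c" "distinct G0"
    using assms(4) by (auto simp: projective_cols_def k_def)
  have cardC0: "card C0 = 2^k" using assms(5) by (simp add: lin_code_def C0_def k_def)
  have inj0: "inj_on (cw G0) (vecs k)"
    using cardC0 by (intro eq_card_imp_inj_on) (auto simp: C0i card_vecs)
  have cw0: "cw G (zerov n) = zerov (length G)" for G n by (simp add: cw_def cw_zero)
  have w0: "wt (cw G0 u0) = A \<or> wt (cw G0 u0) = A+B" if "u0 \<in> vecs k" "u0 \<noteq> zerov k" for u0
  proof -
    have "cw G0 u0 \<noteq> cw G0 (zerov k)" using inj0 that inj_onD[of "cw G0" "vecs k" u0 "zerov k"] by (auto simp: vecs_len)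
    moreover have L: "length (cw G0 u0) = length G0" by (simp add: cw_def)
    ultimately have "is_nonzero (cw G0 u0)" by (simp add: cw0 is_nonzero_iff)
    moreover have "cw G0 u0 \<in> C0" using that C0i by auto
    ultimately have "wt (cw G0 u0) \<in> nz_weights C0" by (auto simp: nz_weights_img)
    then show ?thesis using assms(6) by (simp add: C0_def k_def A_def B_def)
  qed
  obtain u0 where u0: "u0 \<in> vecs k" "u0 \<noteq> zerov k" "wt (cw G0 u0) = A+B"
  proof -
    have "A+B \<in> nz_weights C0" using assms(6) by (simp add: C0_def k_def A_def B_def)
    then obtain c where c: "c \<in> C0" "is_nonzero c" "wt c = A+B" by (auto simp: nz_weights_img)
    then obtain u where u: "u \<in> vecs k" "c = cw G0 u" using C0i by auto
    have "u \<noteq> zerov k" using c u XA by (auto simp: cw0)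
    then show ?thesis using that u c by auto
  qed
  define pad where "pad = (\<lambda>c::bool list. c @ replicate h False)"
  define NZ where "NZ = {v \<in> vecs K. is_nonzero v}"
  define P where "P = pad ` set G0"
  have sc: "distinct G1" "set G1 = NZ - P"
    using assms(7) by (auto simp: simplex_compl_cols_def NZ_def P_def pad_def KK k_def)
  have PNZ: "P \<subseteq> NZ" using proj
    by (auto simp: P_def NZ_def pad_def KK vecs_len is_nonzero_def)
  have injpad: "inj_on pad X'" for X' by (auto simp: pad_def inj_on_def)
  have cardP: "card P = length G0" unfolding P_def
    using card_image[OF injpad] distinct_card[OF proj(2)] by simp
  have NZe: "NZ = vecs K - {zerov K}" by (auto simp: NZ_def nz_vecs)
  have cardNZ: "card NZ = 2^K - 1" unfolding NZe
    by (simp add: card_Diff_singleton card_vecs vecs_len)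
  have finNZ: "finite NZ" by (simp add: NZ_def)
  have lenG1: "N = 2*X - 2*A - B"
  proof -
    have "N = card (set G1)" using distinct_card[OF sc(1)] by (simp add: N_def)
    also have "\<dots> = card NZ - card P" using sc(2) PNZ finNZ by (simp add: card_Diff_subset finite_subset)
    finally show ?thesis using cardNZ cardP lenG0 eK XA by simp
  qed
  have lenc1: "\<forall>c\<in>set G1. length c = K" using sc(2) by (auto simp: NZ_def vecs_len)
  have wtG1: "wt (cw G1 u) = X - wt (cw G0 (take k u))" if "u \<in> vecs K" "is_nonzero u" for u
  proof -
    have "wt (cw G1 u) = card {c \<in> set G1. dotp u c}" by (simp add: cw_def wt_map_distinct sc(1))
    also have "{c \<in> set G1. dotp u c} = {c \<in> vecs K. dotp u c} - {c \<in> P. dotp u c}"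
      using sc(2) PNZ dotp_zero2 by (auto simp: NZ_def)
    also have "card \<dots> = card {c \<in> vecs K. dotp u c} - card {c \<in> P. dotp u c}"
      using PNZ by (intro card_Diff_subset) (auto simp: P_def NZ_def)
    also have "card {c \<in> vecs K. dotp u c} = X" using count_dotp[of u K] that eK by (simp add: vecs_len)
    also have "{c \<in> P. dotp u c} = pad ` {g \<in> set G0. dotp (take k u) g}"
      using proj by (auto simp: P_def pad_def dotp_pad)
    also have "card \<dots> = card {g \<in> set G0. dotp (take k u) g}" using card_image[OF injpad] by simp
    also have "\<dots> = wt (cw G0 (take k u))" by (simp add: cw_def wt_map_distinct proj(2))
    finally show ?thesis .
  qed
  have bnd1: "X - A - B \<le> wt (cw G1 u) \<and> wt (cw G1 u) \<le> X" if "u \<in> vecs K" "u \<noteq> zerov K" for u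
  proof -
    have nz: "is_nonzero u" using that nz_vecs by blast
    have tk: "take k u \<in> vecs k" using that K2 by (simp add: vecs_len)
    show ?thesis
    proof (cases "take k u = zerov k")
      case True then show ?thesis using wtG1[OF that(1) nz] by (simp add: cw0)
    next
      case False then show ?thesis using wtG1[OF that(1) nz] w0[OF tk False] by auto
    qed
  qed
  have lenG1w: "length (cw G1 u) = N" for u by (simp add: cw_def N_def)
  have nzG1: "is_nonzero (cw G1 u)" if "u \<in> vecs K" "u \<noteq> zerov K" for u
  proof -
    have "wt (cw G1 u) > 0" using bnd1[OF that] XA by linarith
    then show ?thesis using wt_pos_iff by blast
  qed
  have cwv: "vadd (cw G1 u) (cw G1 v) = cw G1 (vadd u v)" if "u \<in> vecs K" "v \<in> vecs K" for u v
  proof -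
    have "length u = length v" using that by (simp add: vecs_len)
    then show ?thesis unfolding cw_def using cw_vadd[of u v G1] by simp
  qed
  have inj1: "inj_on (cw G1) (vecs K)"
  proof (rule inj_onI)
    fix u v assume uv: "u \<in> vecs K" "v \<in> vecs K" "cw G1 u = cw G1 v"
    have "vadd u v \<in> vecs K" using uv by (simp add: vecs_len)
    moreover have "cw G1 (vadd u v) = zerov N"
      using cwv[OF uv(1,2)] uv(3) lenG1w[of v] vadd_self[of "cw G1 v"] by simp
    then have "\<not> is_nonzero (cw G1 (vadd u v))" by (simp add: is_nonzero_def zerov_def)
    ultimately have "vadd u v = zerov K" using nzG1 by blast
    then show "u = v" using uv vadd_eq_zero[of u v] by (simp add: vecs_len)
  qed
  have lin1: "lin_code C1 N K"
    unfolding lin_code_def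
  proof (intro conjI ballI)
    show "C1 \<subseteq> vecs N" using lenG1w by (auto simp: C1i vecs_len)
    have "zerov K \<in> vecs K" by (simp add: vecs_len)
    then show "zerov N \<in> C1" unfolding C1i using cw0[of G1 K] N_def by (metis image_eqI)
    show "vadd a b \<in> C1" if ab: "a \<in> C1" "b \<in> C1" for a b
    proof -
      obtain u v where "u \<in> vecs K" "v \<in> vecs K" "a = cw G1 u" "b = cw G1 v"
        using ab C1i by auto
      moreover have "vadd u v \<in> vecs K" using calculation by (simp add: vecs_len)
      ultimately show ?thesis using cwv[of u v] C1i by auto
    qed
    show "card C1 = 2^K" using inj1 by (simp add: C1i card_image card_vecs)
  qed
  have finC1: "finite C1" by (simp add: C1i)
  have wm1: "wmin C1 = X - A - B \<and> wmax C1 = X"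
  proof (rule wminmax_eq[OF finC1])
    show "\<forall>c\<in>C1. is_nonzero c \<longrightarrow> X - A - B \<le> wt c \<and> wt c \<le> X"
    proof (intro ballI impI)
      fix c assume c: "c \<in> C1" "is_nonzero c"
      then obtain u where u: "u \<in> vecs K" "c = cw G1 u" using C1i by auto
      have "u \<noteq> zerov K" using c u cw0[of G1 K] by (auto simp: is_nonzero_def zerov_def)
      then show "X - A - B \<le> wt c \<and> wt c \<le> X" using bnd1 u by blast
    qed
    define ua where "ua = u0 @ zerov h"
    have lu0: "length u0 = k" using u0(1) by (simp add: vecs_len)
    have ua3: "take k ua = u0" using lu0 by (simp add: ua_def)
    have ua1: "ua \<in> vecs K" using lu0 by (simp add: ua_def vecs_len KK)
    have ua2: "ua \<noteq> zerov K"
    proof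
      assume "ua = zerov K"
      then have "take k ua = zerov k" using K2 by (simp add: zerov_def)
      then show False using ua3 u0(2) by simp
    qed
    note ua = ua1 ua2 ua3
    show "cw G1 ua \<in> C1" using ua C1i by auto
    show "is_nonzero (cw G1 ua)" using nzG1 ua by blast
    have "is_nonzero ua" using ua nz_vecs by blast
    then show "wt (cw G1 ua) = X - A - B" using wtG1[OF ua(1)] ua(3) u0(3) by simp
    define ub where "ub = zerov k @ True # zerov (h-1)"
    have ub1: "ub \<in> vecs K" using assms(2) by (simp add: ub_def vecs_len KK)
    have ub3: "take k ub = zerov k" by (simp add: ub_def)
    have "True \<in> set ub" by (simp add: ub_def)
    then have ub2: "ub \<noteq> zerov K" by (auto simp: zerov_def)
    note ub = ub1 ub2 ub3
    show "cw G1 ub \<in> C1" using ub C1i by auto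
    show "is_nonzero (cw G1 ub)" using nzG1 ub by blast
    have "is_nonzero ub" using ub nz_vecs by blast
    then show "wt (cw G1 ub) = X" using wtG1[OF ub(1)] ub(3) by (simp add: cw0)
  qed
  have eb: "length rs = K" "\<forall>r\<in>set rs. length r = N" "inj_on (lincomb N rs) (vecs K)"
     "lincomb N rs ` vecs K = C1" "wt (rs!0) = X" "wt (rs!1) = X - A - B"
    using assms(8) wm1 by (auto simp: ext_basis_def code_of_rows_def C1_def K_def N_def)
  define n' where "n' = X - 2*A - 2*B"
  have n'e: "2 * wmin C1 - wmax C1 = n'" using wm1 by (simp add: n'_def)
  have n'pos: "n' > 0" "n' + 2*A + 2*B = X" "2*(X-A-B) = n' + X" "X - A - B > 0"
    using XA by (simp_all add: n'_def)
  define f where "f = (\<lambda>u. replicate n' (hd u) @ lincomb N rs u)"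
  define C' where "C' = ext_code N C1 rs"
  have C'i: "C' = f ` vecs K"
  proof -
    have ll: "length ((replicate n' True @ rs!0) # map (\<lambda>r. replicate n' False @ r) (tl rs)) = K"
      using eb(1) K2 by simp
    have "C' = lincomb (n'+N) ((replicate n' True @ rs!0) # map (\<lambda>r. replicate n' False @ r) (tl rs)) ` vecs K"
      unfolding C'_def ext_code_def Let_def n'e code_of_rows_def ll by simp
    also have "\<dots> = f ` vecs K" using ext_struct[OF eb(1) _ eb(2)] K2
      by (intro image_cong) (auto simp: f_def vecs_len)
    finally show ?thesis .
  qed
  have Lz: "lincomb N rs (zerov K) = zerov N" by (rule lincomb_zero)
  have hdz: "hd (zerov K) = False" using K2 by (cases K) (auto simp: zerov_def)
  have fz: "f (zerov K) = zerov (n'+N)" unfolding f_def Lz hdz by (simp add: zerov_def replicate_add)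
  have lenL: "length (lincomb N rs u) = N" for u using lincomb_len eb(2) by blast
  have Lnz: "lincomb N rs u \<noteq> zerov N" if "u\<in>vecs K" "u\<noteq>zerov K" for u
    using that eb(3) Lz inj_onD[of "lincomb N rs" "vecs K" u "zerov K"] by (auto simp: vecs_len)
  have LC1: "lincomb N rs u \<in> C1" if "u \<in> vecs K" for u using eb(4) that by auto
  have Lb: "X-A-B \<le> wt (lincomb N rs u) \<and> wt (lincomb N rs u) \<le> X" if "u\<in>vecs K" "u\<noteq>zerov K" for u
  proof -
    have "is_nonzero (lincomb N rs u)" using Lnz[OF that] lenL by (simp add: is_nonzero_iff)
    then show ?thesis using wminmax_bounds[OF finC1 LC1[OF that(1)]] wm1 by simp
  qed
  have wtf: "wt (f u) = (if hd u then n' else 0) + wt (lincomb N rs u)" for u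
    by (simp add: f_def wt_replicate)
  have lenf: "length (f u) = n' + N" for u by (simp add: f_def lenL)
  have fv: "vadd (f u) (f v) = f (vadd u v)" if "u \<in> vecs K" "v \<in> vecs K" for u v
  proof -
    have l: "length u = length rs" "length v = length rs" "u \<noteq> []" "v \<noteq> []"
      using that eb(1) K2 by (auto simp: vecs_len)
    show ?thesis unfolding f_def
      by (simp add: vadd_append vadd_rep hd_vadd[OF l(3,4)] lincomb_vadd[OF eb(2) l(1,2)])
  qed
  have injf: "inj_on f (vecs K)"
  proof (rule inj_onI)
    fix u v assume uv: "u \<in> vecs K" "v \<in> vecs K" "f u = f v"
    then have "drop n' (f u) = drop n' (f v)" by simp
    then have "lincomb N rs u = lincomb N rs v" by (simp add: f_def)
    then show "u = v" using eb(3) uv inj_onD by metis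
  qed
  have fnz: "is_nonzero (f u)" if "u\<in>vecs K" "u\<noteq>zerov K" for u
  proof -
    have "wt (f u) > 0" using wtf[of u] Lb[OF that] n'pos by linarith
    then show ?thesis using wt_pos_iff by blast
  qed
  have finC': "finite C'" by (simp add: C'i)
  have lin': "lin_code C' (N + n') K"
    unfolding lin_code_def
  proof (intro conjI ballI)
    show "C' \<subseteq> vecs (N + n')" using lenf by (auto simp: C'i vecs_len)
    have "zerov K \<in> vecs K" by (simp add: vecs_len)
    then show "zerov (N + n') \<in> C'" unfolding C'i using fz by (metis image_eqI add.commute)
    show "vadd a b \<in> C'" if ab: "a \<in> C'" "b \<in> C'" for a b
    proof -
      obtain u v where "u \<in> vecs K" "v \<in> vecs K" "a = f u" "b = f v"
        using ab C'i by auto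
      moreover have "vadd u v \<in> vecs K" using calculation by (simp add: vecs_len)
      ultimately show ?thesis using fv[of u v] C'i by auto
    qed
    show "card C' = 2^K" using injf by (simp add: C'i card_image card_vecs)
  qed
  have wtfb: "(hd u \<longrightarrow> n' + (X-A-B) \<le> wt (f u) \<and> wt (f u) \<le> n'+X) \<and>
      (\<not>hd u \<longrightarrow> X-A-B \<le> wt (f u) \<and> wt (f u) \<le> X)" if "u\<in>vecs K" "u\<noteq>zerov K" for u
    using wtf[of u] Lb[OF that] by auto
  obtain r0 r1 rest where rs: "rs = r0 # r1 # rest" using eb(1) K2
    by (metis One_nat_def Suc_1 Suc_le_length_iff)
  have lr: "length r0 = N" "length r1 = N" "\<forall>x\<in>set rest. length x = N" using eb(2) rs by auto
  have wm': "wmin C' = X - A - B \<and> wmax C' = n' + X"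
  proof (rule wminmax_eq[OF finC'])
    show "\<forall>c\<in>C'. is_nonzero c \<longrightarrow> X - A - B \<le> wt c \<and> wt c \<le> n' + X"
    proof (intro ballI impI)
      fix c assume c: "c \<in> C'" "is_nonzero c"
      then obtain u where u: "u \<in> vecs K" "c = f u" using C'i by auto
      have "u \<noteq> zerov K" using c u fz by (auto simp: is_nonzero_def zerov_def)
      then show "X - A - B \<le> wt c \<and> wt c \<le> n' + X" using wtfb[OF u(1)] u by auto
    qed
    define ua where "ua = False # True # zerov (K-2)"
    have ua1: "ua \<in> vecs K" using K2 by (auto simp: ua_def vecs_len)
    have "True \<in> set ua" by (simp add: ua_def)
    then have ua2: "ua \<noteq> zerov K" by (auto simp: zerov_def)
    note ua = ua1 ua2
    have "lincomb N rs ua = r1" unfolding rs ua_def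
      using lr lincomb_Cons[of r0 N "r1#rest"] lincomb_Cons[of r1 N rest] lincomb_zero[of N rest]
        vadd_comm[of r1 "zerov N"] vadd_zero[of r1 N] by simp
    then have "f ua = replicate n' False @ r1" by (simp add: f_def ua_def)
    moreover have "wt r1 = X - A - B" using eb(6) rs by simp
    ultimately show "wt (f ua) = X - A - B" by (simp add: wt_replicate)
    show "f ua \<in> C'" unfolding C'i using ua(1) by (rule imageI)
    show "is_nonzero (f ua)" using fnz[OF ua(1,2)] .
    define ub where "ub = True # zerov (K-1)"
    have ub1: "ub \<in> vecs K" using K2 by (auto simp: ub_def vecs_len)
    have "True \<in> set ub" by (simp add: ub_def)
    then have ub2: "ub \<noteq> zerov K" by (auto simp: zerov_def)
    note ub = ub1 ub2
    have "lincomb N rs ub = r0" unfolding rs ub_def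
      using lr lincomb_Cons[of r0 N "r1#rest"] lincomb_zero[of N "r1#rest"]
        vadd_comm[of r0 "zerov N"] vadd_zero[of r0 N] by simp
    then have "f ub = replicate n' True @ r0" by (simp add: f_def ub_def)
    moreover have "wt r0 = X" using eb(5) rs by simp
    ultimately show "wt (f ub) = n' + X" by (simp add: wt_replicate)
    show "f ub \<in> C'" unfolding C'i using ub(1) by (rule imageI)
    show "is_nonzero (f ub)" using fnz[OF ub(1,2)] .
  qed
  have min': "minimal_code C'"
    unfolding minimal_code_def
  proof (intro ballI impI)
    fix c c' assume cc: "c \<in> C'" "c' \<in> C'" and H: "is_nonzero c \<and> is_nonzero c' \<and> supp c \<subseteq> supp c'"
    obtain u where u: "u\<in>vecs K" "c = f u" using cc C'i by auto
    obtain v where v: "v\<in>vecs K" "c' = f v" using cc C'i by auto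
    have unz: "u \<noteq> zerov K" using H u fz by (auto simp: is_nonzero_def zerov_def)
    have vnz: "v \<noteq> zerov K" using H v fz by (auto simp: is_nonzero_def zerov_def)
    show "c = c'"
    proof (rule ccontr)
      assume ne: "c \<noteq> c'"
      define w where "w = vadd u v"
      have w: "w \<in> vecs K" using u v by (simp add: w_def vecs_len)
      have fw: "f w = vadd c c'" using fv[OF u(1) v(1)] u v by (simp add: w_def)
      have wnz: "w \<noteq> zerov K"
      proof
        assume "w = zerov K"
        then have "u = v" using vadd_eq_zero[of u v] u v by (simp add: w_def vecs_len)
        then show False using ne u v by simp
      qed
      have pw: "\<forall>i<length c. c!i \<longrightarrow> c'!i"
        using H lenf u v by (auto simp: supp_def)
      have spl: "wt c' = wt c + wt (f w)" unfolding fw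
        using wt_split[OF _ pw] lenf u v by simp
      have hw: "hd w = (hd u \<noteq> hd v)" unfolding w_def
        using u v K2 by (intro hd_vadd) (auto simp: vecs_len)
      show False
        using wtfb[OF u(1) unz] wtfb[OF v(1) vnz] wtfb[OF w wnz] spl hw u v n'pos
        by (cases "hd u"; cases "hd v") auto
    qed
  qed
  have ab': "\<not> ashikhmin_barg C'"
  proof -
    have "real (wmax C') = 2 * real (wmin C')" using wm' n'pos(3) by (metis of_nat_mult of_nat_numeral)
    then show ?thesis using wm' n'pos(4) by (simp add: ashikhmin_barg_def)
  qed
  have S: "2*m+h-2 = K" "code_of_cols K G1 = C1" "length G1 = N" "ext_code N C1 rs = C'"
    "(2::nat)^(2*m+h-3) = X" "(2::nat)^(2*m-4) = A" "(2::nat)^(m-2) = B"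
    "(2::nat)^(2*m-3) = 2*A" "(2::nat)^(m-1) = 2*B" "(2::nat)^K = 2*X"
    "X - 2*A - 2*B = n'" "2*X - 2*A - B = N"
    using e1 eK lenG1 by (simp_all add: K_def C1_def N_def C'_def X_def A_def B_def n'_def)
  show ?thesis unfolding Let_def
    apply (simp only: S)
    using lin1 wm1 lin' wm' min' ab' n'pos by simp
qed
end
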